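(* Let $\mathcal G_N$ be a subset of $\mathbb P^N$ and let $\Sigma$ be an analytically meagre subset of $\mathbb P^N$. Let $\mathcal G_{N-1}$ be a subset of $\mathbb P^{N-1}$ such that $\mathcal G_{N-1}\setminus\mathcal S_{N-1}$ is dense in $\mathbb P^{N-1}$ in the classical topology for every analytically meagre subset $\mathcal S_{N-1}$ of $\mathbb P^{N-1}$. Let $P\in\mathbb P^N$ and let $p:\mathbb P^N\setminus\{P\}\to\mathbb P^{N-1}$ be the linear projection from $P$. Assume that for every $x\in\mathcal G_{N-1}$ with $p^{-1}(x)\setminus\Sigma\neq\emptyset$, almost all points of $p^{-1}(x)$ are contained in $\mathcal G_N$. Then $\mathcal G_N\setminus\mathcal S_N$ is dense in $\mathbb P^N$ in the classical topology for every analytically meagre subset $\mathcal S_N$ of $\mathbb P^N$.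
   Context: A subset of a complex analytic space $X$ is analytically meagre if it is contained in a countable union of locally closed analytic subsets of $X$ of codimension $\ge 1$. Here $p^{-1}(x)\simeq\mathbb C$, and "almost all points of $p^{-1}(x)$" means all points outside a subset of $p^{-1}(x)$ of Lebesgue measure zero. *)

theory Defs
  imports "HOL-Analysis.Analysis"
begin

text \<open>Complex projective space P(V) for V = complex^'n (so P^N with N+1 = CARD('n)):
  a point is a complex line through the origin, i.e. a set of vectors.\<close>

definition cline :: "complex^'n \<Rightarrow> (complex^'n) set" where
  "cline v = {c *s v | c. True}"

definition PS :: "(complex^'n) set set" where
  "PS = {cline v | v. v \<noteq> 0}"

text \<open>Cone over a set of projective points (preimage under C^{N+1}-{0} -> P^N).\<close>
definition cone :: "(complex^'n) set set \<Rightarrow> (complex^'n) set" where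
  "cone A = {v. v \<noteq> 0 \<and> cline v \<in> A}"

text \<open>Classical (quotient) topology: U \<subseteq> P^N is open iff its cone is open.\<close>
definition proj_open :: "(complex^'n) set set \<Rightarrow> bool" where
  "proj_open U \<longleftrightarrow> U \<subseteq> PS \<and> open (cone U)"

definition proj_dense :: "(complex^'n) set set \<Rightarrow> bool" where
  "proj_dense X \<longleftrightarrow> (\<forall>U. proj_open U \<and> U \<noteq> {} \<longrightarrow> U \<inter> X \<noteq> {})"

text \<open>Holomorphic functions of several complex variables: complex Frechet differentiable.\<close>
definition holo_on :: "(complex^'n \<Rightarrow> complex) \<Rightarrow> (complex^'n) set \<Rightarrow> bool" where
  "holo_on f V \<longleftrightarrow> (\<forall>z\<in>V. \<exists>D. (f has_derivative D) (at z) \<and>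
        (\<forall>c x. D (c *s x) = c * D x))"

text \<open>Locally closed analytic subset of C^{N+1}-{0}: locally the common zero set of
  finitely many holomorphic functions.\<close>
definition lc_analytic :: "(complex^'n) set \<Rightarrow> bool" where
  "lc_analytic C \<longleftrightarrow> 0 \<notin> C \<and> (\<forall>a\<in>C. \<exists>V F. open V \<and> a \<in> V \<and> 0 \<notin> V \<and> finite F \<and>
       (\<forall>f\<in>F. holo_on f V) \<and> C \<inter> V = {z\<in>V. \<forall>f\<in>F. f z = 0})"

text \<open>Locally closed analytic subset of P^N of codimension \<ge> 1 (via its cone;
  codimension \<ge> 1 of an analytic subset of a connected manifold = empty interior).\<close>
definition proj_lc_analytic_codim1 :: "(complex^'n) set set \<Rightarrow> bool" where
  "proj_lc_analytic_codim1 A \<longleftrightarrow> A \<subseteq> PS \<and> lc_analytic (cone A) \<and> interior (cone A) = {}"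

definition analytically_meagre :: "(complex^'n) set set \<Rightarrow> bool" where
  "analytically_meagre S \<longleftrightarrow>
     (\<exists>A :: nat \<Rightarrow> (complex^'n) set set. (\<forall>i. proj_lc_analytic_codim1 (A i)) \<and> S \<subseteq> (\<Union>i. A i))"

text \<open>Linear projection from P = cline v: induced by a complex-linear surjection L
  with kernel the line v; p(y) = L ` y.\<close>
definition lin_proj_from :: "(complex^'n) \<Rightarrow> (complex^'n \<Rightarrow> complex^'m) \<Rightarrow> bool" where
  "lin_proj_from v L \<longleftrightarrow> v \<noteq> 0 \<and> Vector_Spaces.linear (*s) (*s) L \<and> surj L \<and>
      {u. L u = 0} = cline v"

definition proj_fiber :: "(complex^'n) \<Rightarrow> (complex^'n \<Rightarrow> complex^'m) \<Rightarrow> (complex^'m) set \<Rightarrow> (complex^'n) set set" where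
  "proj_fiber v L x = {y \<in> PS. y \<noteq> cline v \<and> L ` y = x}"

end

theory Submission
  imports Defs "HOL-Complex_Analysis.Complex_Analysis"
begin

abbreviation clin :: "(complex^'a \<Rightarrow> complex^'b) \<Rightarrow> bool" where
  "clin f \<equiv> Vector_Spaces.linear (*s) (*s) f"

lemma clin_add: "clin f \<Longrightarrow> f (x + y) = f x + f y"
  unfolding Vector_Spaces.linear_def module_hom_def module_hom_axioms_def by blast

lemma clin_scale: "clin f \<Longrightarrow> f (c *s x) = c *s f x"
  unfolding Vector_Spaces.linear_def module_hom_def module_hom_axioms_def by blast

lemma clin_0: "clin f \<Longrightarrow> f 0 = 0"
  by (metis clin_scale vector_smult_lzero)

lemma clin_diff: "clin f \<Longrightarrow> f (x - y) = f x - f y"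
  by (metis add_diff_cancel clin_add diff_add_cancel)

lemma scaleR_cvec: "r *\<^sub>R (x::complex^'a) = complex_of_real r *s x"
  unfolding vec_eq_iff by (auto simp: scaleR_conv_of_real[where 'a=complex])

lemma clin_linear: "clin f \<Longrightarrow> linear f"
  by (simp add: linear_iff clin_add scaleR_cvec clin_scale)

lemma clin_bl: "clin (f::complex^'a \<Rightarrow> complex^'b) \<Longrightarrow> bounded_linear f"
  using clin_linear linear_conv_bounded_linear by blast

lemma clinI: "(\<And>x y. f (x + y) = f x + f y) \<Longrightarrow> (\<And>c x. f (c *s x) = c *s f x) \<Longrightarrow> clin f"
  unfolding Vector_Spaces.linear_def module_hom_def module_hom_axioms_def
  by (auto simp: vec.vector_space_axioms module_iff_vector_space)

lemma smult_bl: "bounded_linear (\<lambda>s::complex. s *s (v::complex^'a))"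
proof -
  have "linear (\<lambda>s::complex. s *s v)"
    unfolding linear_iff vec_eq_iff by (auto simp: algebra_simps scaleR_conv_of_real[where 'a=complex])
  then show ?thesis using linear_conv_bounded_linear by blast
qed

lemma cline_mem: "z \<in> cline z"
  unfolding cline_def by (auto intro: exI[of _ 1])

lemma mem_cline: "y \<in> cline z \<longleftrightarrow> (\<exists>c. y = c *s z)"
  by (auto simp: cline_def)

lemma cline_smult: assumes "c \<noteq> 0" shows "cline (c *s z) = cline z"
proof -
  have 1: "d *s (c *s z) = (d * c) *s z" for d by (simp add: vector_smult_assoc)
  have 2: "d *s z = (d / c) *s (c *s z)" for d using assms by (simp add: vector_smult_assoc)
  show ?thesis unfolding set_eq_iff mem_cline using 1 2 by metis
qed

lemma cline_eq: "w \<noteq> 0 \<Longrightarrow> cline w = cline z \<Longrightarrow> \<exists>c. c \<noteq> 0 \<and> w = c *s z"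
  by (metis cline_mem mem_cline vector_smult_lzero)

lemma L_cline: "clin L \<Longrightarrow> L ` cline z = cline (L z)"
  unfolding cline_def using clin_scale by fastforce

lemma cone_scale: "z \<in> cone A \<Longrightarrow> c \<noteq> 0 \<Longrightarrow> c *s z \<in> cone A"
  unfolding cone_def by (auto simp: cline_smult vec_eq_iff)

lemma cone_cline_image:
  assumes "\<And>w. w \<in> E \<Longrightarrow> w \<noteq> 0" "\<And>w c. w \<in> E \<Longrightarrow> c \<noteq> 0 \<Longrightarrow> c *s w \<in> E"
  shows "cone (cline ` E) = E"
proof
  show "cone (cline ` E) \<subseteq> E"
  proof
    fix z assume "z \<in> cone (cline ` E)"
    then obtain e where "z \<noteq> 0" "e \<in> E" "cline z = cline e" unfolding cone_def by auto
    then obtain c where "c \<noteq> 0" "z = c *s e" using cline_eq by blast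
    then show "z \<in> E" using assms \<open>e \<in> E\<close> by blast
  qed
  show "E \<subseteq> cone (cline ` E)" using assms(1) unfolding cone_def by auto
qed

lemma cline_PS: "z \<noteq> 0 \<Longrightarrow> cline z \<in> PS"
  unfolding PS_def by auto

lemma PS_cone: "y \<in> A \<Longrightarrow> A \<subseteq> PS \<Longrightarrow> \<exists>z. z \<noteq> 0 \<and> y = cline z \<and> z \<in> cone A"
  unfolding PS_def cone_def by auto

lemma holo_line:
  assumes "holo_on f V"
  shows "(\<lambda>t. f (p + t *s q)) holomorphic_on {t. p + t *s q \<in> V}"
  unfolding holomorphic_on_def
proof
  fix t assume "t \<in> {t. p + t *s q \<in> V}"
  then obtain D where D: "(f has_derivative D) (at (p + t *s q))" "\<And>c x. D (c *s x) = c * D x"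
    using assms unfolding holo_on_def by auto
  have l: "((\<lambda>t. p + t *s q) has_derivative (\<lambda>s. s *s q)) (at t)"
    using has_derivative_add[OF has_derivative_const[of p] bounded_linear_imp_has_derivative[OF smult_bl[of q]]]
    by simp
  have "((\<lambda>t. f (p + t *s q)) has_derivative (\<lambda>s. D (s *s q))) (at t)"
    using diff_chain_at[OF l D(1)] by (simp add: o_def)
  moreover have "(\<lambda>s. D (s *s q)) = (*) (D q)"
    using D(2) by (auto simp: mult.commute)
  ultimately have "((\<lambda>t. f (p + t *s q)) has_field_derivative D q) (at t)"
    by (simp add: has_field_derivative_def)
  then show "(\<lambda>t. f (p + t *s q)) field_differentiable at t within {t. p + t *s q \<in> V}"
    using field_differentiable_at_within field_differentiable_def by blast
qed

lemma line_cont: "continuous_on UNIV (\<lambda>t::complex. p + t *s (q::complex^'a))"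
  using smult_bl[of q] by (intro continuous_intros) (simp add: linear_continuous_on)

lemma open_line_vimage: "open V \<Longrightarrow> open {t::complex. p + t *s (q::complex^'a) \<in> V}"
  using line_cont[of p q] open_vimage[of V "\<lambda>t. p + t *s q"] by (simp add: vimage_def)

lemma convex_line_vimage:
  assumes "convex K" shows "convex {t::complex. p + t *s (q::complex^'a) \<in> K}"
proof (rule convexI)
  fix x y :: complex and u v :: real
  assume xy: "x \<in> {t. p + t *s q \<in> K}" "y \<in> {t. p + t *s q \<in> K}" "0 \<le> u" "0 \<le> v" "u + v = 1"
  have e: "p + (u *\<^sub>R x + v *\<^sub>R y) *s q = u *\<^sub>R (p + x *s q) + v *\<^sub>R (p + y *s q)"
  proof -
    have uv: "complex_of_real u + complex_of_real v = 1" by (metis xy(5) of_real_add of_real_1)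
    show ?thesis unfolding vec_eq_iff
    proof
      fix i
      have "p$i = (complex_of_real u + complex_of_real v) * p$i" using uv by simp
      then show "(p + (u *\<^sub>R x + v *\<^sub>R y) *s q) $ i = (u *\<^sub>R (p + x *s q) + v *\<^sub>R (p + y *s q)) $ i"
        by (simp add: scaleR_conv_of_real[where 'a=complex] algebra_simps)
    qed
  qed
  have "u *\<^sub>R (p + x *s q) + v *\<^sub>R (p + y *s q) \<in> K"
    using convexD[OF assms] xy by simp
  then show "u *\<^sub>R x + v *\<^sub>R y \<in> {t. p + t *s q \<in> K}" unfolding mem_Collect_eq e .
qed

lemma holo_ident:
  assumes g: "holo_on g K" and K: "convex K" "open K" and W: "open W" "W \<subseteq> K" "w1 \<in> W"
    and g0: "\<And>w. w \<in> W \<Longrightarrow> g w = 0" and z: "z \<in> K"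
  shows "g z = 0"
proof -
  define S where "S = {t. w1 + t *s (z - w1) \<in> K}"
  define T where "T = {t. w1 + t *s (z - w1) \<in> W}"
  have hol: "(\<lambda>t. g (w1 + t *s (z - w1))) holomorphic_on S"
    unfolding S_def by (rule holo_line[OF g])
  have "open S" unfolding S_def by (rule open_line_vimage[OF K(2)])
  have "open T" unfolding T_def by (rule open_line_vimage[OF W(1)])
  have "connected S" unfolding S_def using convex_line_vimage[OF K(1)] convex_connected by blast
  have "0 \<in> T" using W unfolding T_def by simp
  have "T \<subseteq> S" using W unfolding T_def S_def by auto
  have "1 \<in> S" using z unfolding S_def by simp
  have "T \<noteq> {}" using \<open>0 \<in> T\<close> by blast
  have h0: "\<And>t. t \<in> T \<Longrightarrow> g (w1 + t *s (z - w1)) = (\<lambda>_. 0) t" using g0 unfolding T_def by auto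
  have "g (w1 + 1 *s (z - w1)) = (\<lambda>_. 0) (1::complex)"
    by (rule analytic_continuation_open[OF \<open>open T\<close> \<open>open S\<close> \<open>T \<noteq> {}\<close> \<open>connected S\<close> \<open>T \<subseteq> S\<close> hol
          holomorphic_on_const h0 \<open>1 \<in> S\<close>])
  then show ?thesis by simp
qed

lemma lc_pullback:
  fixes M :: "complex^'a \<Rightarrow> complex^'b" and C :: "(complex^'b) set"
  assumes C: "lc_analytic C" and Op: "open Op" and M: "clin M"
  shows "lc_analytic {w. M w \<in> C \<and> M w \<in> Op}"
  unfolding lc_analytic_def
proof (intro conjI ballI)
  show "0 \<notin> {w. M w \<in> C \<and> M w \<in> Op}" using C clin_0[OF M] unfolding lc_analytic_def by auto
  fix a assume a: "a \<in> {w. M w \<in> C \<and> M w \<in> Op}"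
  then obtain V F where V: "open V" "M a \<in> V" "0 \<notin> V" "finite F" "\<forall>f\<in>F. holo_on f V"
      "C \<inter> V = {z\<in>V. \<forall>f\<in>F. f z = 0}"
    using C unfolding lc_analytic_def by blast
  define V' where "V' = M -` (V \<inter> Op)"
  define F' where "F' = (\<lambda>f. f \<circ> M) ` F"
  have cM: "continuous_on UNIV M" using clin_bl[OF M] linear_continuous_on by blast
  have "open V'" unfolding V'_def using open_vimage[OF open_Int[OF V(1) Op] cM] by simp
  have "a \<in> V'" using a V unfolding V'_def by auto
  have "0 \<notin> V'" using V(3) clin_0[OF M] unfolding V'_def by auto
  have "finite F'" using V(4) unfolding F'_def by simp
  have "\<forall>g\<in>F'. holo_on g V'"
  proof
    fix g assume "g \<in> F'" then obtain f where f: "f \<in> F" "g = f \<circ> M" unfolding F'_def by auto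
    show "holo_on g V'" unfolding holo_on_def
    proof
      fix z assume "z \<in> V'"
      then have "M z \<in> V" unfolding V'_def by auto
      then obtain D where D: "(f has_derivative D) (at (M z))" "\<forall>c x. D (c *s x) = c * D x"
        using V(5) f(1) unfolding holo_on_def by blast
      have "(g has_derivative (D \<circ> M)) (at z)" unfolding f(2)
        by (rule diff_chain_at[OF bounded_linear_imp_has_derivative[OF clin_bl[OF M]] D(1)])
      moreover have "\<forall>c x. (D \<circ> M) (c *s x) = c * (D \<circ> M) x" using D(2) clin_scale[OF M] by simp
      ultimately show "\<exists>D. (g has_derivative D) (at z) \<and> (\<forall>c x. D (c *s x) = c * D x)" by blast
    qed
  qed
  have "{w. M w \<in> C \<and> M w \<in> Op} \<inter> V' = {z\<in>V'. \<forall>g\<in>F'. g z = 0}"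
  proof (rule set_eqI)
    fix z
    show "z \<in> {w. M w \<in> C \<and> M w \<in> Op} \<inter> V' \<longleftrightarrow> z \<in> {z\<in>V'. \<forall>g\<in>F'. g z = 0}"
    proof (cases "z \<in> V'")
      case True
      then have "M z \<in> V" "M z \<in> Op" unfolding V'_def by auto
      then have "M z \<in> C \<longleftrightarrow> (\<forall>f\<in>F. f (M z) = 0)" using V(6) by blast
      then show ?thesis using True \<open>M z \<in> Op\<close> unfolding F'_def by auto
    qed auto
  qed
  then show "\<exists>V F. open V \<and> a \<in> V \<and> 0 \<notin> V \<and> finite F \<and> (\<forall>f\<in>F. holo_on f V) \<and>
      {w. M w \<in> C \<and> M w \<in> Op} \<inter> V = {z\<in>V. \<forall>f\<in>F. f z = 0}"
    using \<open>open V'\<close> \<open>a \<in> V'\<close> \<open>0 \<notin> V'\<close> \<open>finite F'\<close> \<open>\<forall>g\<in>F'. holo_on g V'\<close> by blast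
qed

lemma holo_on_subset: "holo_on f V \<Longrightarrow> W \<subseteq> V \<Longrightarrow> holo_on f W"
  unfolding holo_on_def by blast

lemma lc_charts:
  fixes C :: "(complex^'a) set"
  assumes "lc_analytic C"
  obtains Ac r F where "countable Ac" "Ac \<subseteq> C" "C \<subseteq> (\<Union>a\<in>Ac. ball a (r a))"
    "\<And>a. a \<in> C \<Longrightarrow> r a > 0 \<and> finite (F a) \<and> (\<forall>f\<in>F a. holo_on f (ball a (r a))) \<and>
        C \<inter> ball a (r a) = {z \<in> ball a (r a). \<forall>f\<in>F a. f z = 0}"
proof -
  have "\<forall>a\<in>C. \<exists>r F. r > 0 \<and> finite F \<and> (\<forall>f\<in>F. holo_on f (ball a r)) \<and>
        C \<inter> ball a r = {z \<in> ball a r. \<forall>f\<in>F. f z = 0}"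
  proof
    fix a assume "a \<in> C"
    then obtain V F where V: "open V" "a \<in> V" "finite F" "\<forall>f\<in>F. holo_on f V"
      "C \<inter> V = {z\<in>V. \<forall>f\<in>F. f z = 0}"
      using assms \<open>a \<in> C\<close> unfolding lc_analytic_def by blast
    obtain r where r: "r > 0" "ball a r \<subseteq> V" using V(1,2) open_contains_ball by blast
    have "C \<inter> ball a r = (C \<inter> V) \<inter> ball a r" using r(2) by blast
    also have "\<dots> = {z \<in> ball a r. \<forall>f\<in>F. f z = 0}" unfolding V(5) using r(2) by auto
    finally have e: "C \<inter> ball a r = {z \<in> ball a r. \<forall>f\<in>F. f z = 0}" .
    have h: "\<forall>f\<in>F. holo_on f (ball a r)" using V(4) r(2) holo_on_subset by blast
    show "\<exists>r F. r > 0 \<and> finite F \<and> (\<forall>f\<in>F. holo_on f (ball a r)) \<and>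
        C \<inter> ball a r = {z \<in> ball a r. \<forall>f\<in>F. f z = 0}"
      apply (rule exI[of _ r], rule exI[of _ F])
      using r(1) V(3) h e by (intro conjI)
  qed
  from bchoice[OF this] obtain r where r1: "\<forall>a\<in>C. \<exists>F. r a > 0 \<and> finite F \<and> (\<forall>f\<in>F. holo_on f (ball a (r a))) \<and>
        C \<inter> ball a (r a) = {z \<in> ball a (r a). \<forall>f\<in>F. f z = 0}" by blast
  from bchoice[OF r1] obtain F where r2: "\<forall>a\<in>C. r a > 0 \<and> finite (F a) \<and> (\<forall>f\<in>F a. holo_on f (ball a (r a))) \<and>
        C \<inter> ball a (r a) = {z \<in> ball a (r a). \<forall>f\<in>F a. f z = 0}" by blast
  then have rF: "\<And>a. a \<in> C \<Longrightarrow> r a > 0 \<and> finite (F a) \<and> (\<forall>f\<in>F a. holo_on f (ball a (r a))) \<and>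
        C \<inter> ball a (r a) = {z \<in> ball a (r a). \<forall>f\<in>F a. f z = 0}"
    by blast
  obtain \<F>' where F': "\<F>' \<subseteq> (\<lambda>a. ball a (r a)) ` C" "countable \<F>'"
      "\<Union>\<F>' = \<Union>((\<lambda>a. ball a (r a)) ` C)"
    using Lindelof[of "(\<lambda>a. ball a (r a)) ` C"] by blast
  define ch where "ch B = (SOME a. a \<in> C \<and> B = ball a (r a))" for B
  have ch: "ch B \<in> C \<and> B = ball (ch B) (r (ch B))" if "B \<in> \<F>'" for B
  proof -
    have "\<exists>a. a \<in> C \<and> B = ball a (r a)" using that F'(1) by blast
    then show ?thesis unfolding ch_def by (rule someI_ex)
  qed
  show thesis
  proof (rule that[of "ch ` \<F>'" r F])
    show "countable (ch ` \<F>')" using F'(2) by simp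
    show "ch ` \<F>' \<subseteq> C" using ch by blast
    show "C \<subseteq> (\<Union>a\<in>ch ` \<F>'. ball a (r a))"
    proof
      fix z assume "z \<in> C"
      then have "z \<in> ball z (r z)" using rF by simp
      then have "z \<in> \<Union>\<F>'" using F'(3) \<open>z \<in> C\<close> by blast
      then obtain B where "B \<in> \<F>'" "z \<in> B" by blast
      then show "z \<in> (\<Union>a\<in>ch ` \<F>'. ball a (r a))" using ch by blast
    qed
  qed (use rF in blast)
qed

lemma closed_ball_sub: "closed {x::'a::metric_space. ball x e \<subseteq> S}"
proof -
  have "open (- {x. ball x e \<subseteq> S})"
    unfolding open_contains_ball
  proof
    fix x assume "x \<in> - {x. ball x e \<subseteq> S}"
    then obtain y where y: "y \<in> ball x e" "y \<notin> S" by blast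
    define d where "d = e - dist x y"
    have "d > 0" using y unfolding d_def by simp
    moreover have "ball x d \<subseteq> - {x. ball x e \<subseteq> S}"
    proof
      fix x' assume "x' \<in> ball x d"
      then have "dist x' y < e" unfolding d_def using dist_triangle[of x' y x]
        by (simp add: dist_commute)
      then show "x' \<in> - {x. ball x e \<subseteq> S}" using y by auto
    qed
    ultimately show "\<exists>d>0. ball x d \<subseteq> - {x. ball x e \<subseteq> S}" by blast
  qed
  then show ?thesis by (simp add: closed_def)
qed

lemma open_fsigma:
  fixes S :: "'a::metric_space set"
  assumes "open S" shows "fsigma S"
proof -
  have "S = (\<Union>n. {x. ball x (1 / Suc n) \<subseteq> S})"
  proof
    show "S \<subseteq> (\<Union>n. {x. ball x (1 / Suc n) \<subseteq> S})"
    proof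
      fix x assume "x \<in> S"
      then obtain e where e: "e > 0" "ball x e \<subseteq> S" using assms open_contains_ball by blast
      then obtain n where "1 / Suc n < e" using nat_approx_posE by blast
      then have "ball x (1 / Suc n) \<subseteq> S" using e by (meson subset_ball less_imp_le subset_trans)
      then show "x \<in> (\<Union>n. {x. ball x (1 / Suc n) \<subseteq> S})" by blast
    qed
    show "(\<Union>n. {x. ball x (1 / Suc n) \<subseteq> S}) \<subseteq> S"
      by (auto intro: centre_in_ball[THEN iffD2])
  qed
  moreover have "fsigma (\<Union>n. {x. ball x (1 / Suc n) \<subseteq> S})"
    by (rule fsigma.intros) (rule closed_ball_sub)
  ultimately show ?thesis by simp
qed

lemma countable_null: "countable (A::complex set) \<Longrightarrow> A \<in> null_sets lebesgue"
  using countable_imp_null_set_lborel null_sets_completionI by blast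

lemma open_nonnull:
  assumes "open (S::complex set)" "S \<noteq> {}" shows "S \<notin> null_sets lebesgue"
proof
  assume N: "S \<in> null_sets lebesgue"
  obtain x where "x \<in> S" using assms by blast
  then obtain e where e: "e > 0" "ball x e \<subseteq> S" using assms open_contains_ball by blast
  have "ball x e \<in> null_sets lebesgue" using null_sets_subset[OF N _ e(2)] by simp
  then have "ball x e \<in> null_sets lborel" using null_sets_completion_iff[of "ball x e" lborel] by simp
  then have "measure lborel (ball x e) = 0" by (simp add: measure_def null_sets_def)
  then show False using content_ball_pos[OF e(1), of x] by simp
qed

lemma line_nonnull_ball:
  fixes C :: "(complex^'a) set"
  assumes C: "lc_analytic C" and nn: "{t. u + t *s v \<in> C} \<notin> null_sets lebesgue"
  shows "\<exists>t0 r. r > 0 \<and> ball t0 r \<subseteq> {t. u + t *s v \<in> C}"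
proof (rule ccontr)
  assume H: "\<not> (\<exists>t0 r. r > 0 \<and> ball t0 r \<subseteq> {t. u + t *s v \<in> C})"
  obtain Ac r F where ch: "countable Ac" "Ac \<subseteq> C" "C \<subseteq> (\<Union>a\<in>Ac. ball a (r a))"
    "\<And>a. a \<in> C \<Longrightarrow> r a > 0 \<and> finite (F a) \<and> (\<forall>f\<in>F a. holo_on f (ball a (r a))) \<and>
        C \<inter> ball a (r a) = {z \<in> ball a (r a). \<forall>f\<in>F a. f z = 0}"
    using lc_charts[OF C] by blast
  define T where "T = {t. u + t *s v \<in> C}"
  define G where "G a = {t. u + t *s v \<in> ball a (r a)}" for a
  have Tsub: "T \<subseteq> (\<Union>a\<in>Ac. T \<inter> G a)"
  proof
    fix t assume "t \<in> T"
    then have "u + t *s v \<in> C" unfolding T_def by simp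
    then obtain a where "a \<in> Ac" "u + t *s v \<in> ball a (r a)" using ch(3) by blast
    then show "t \<in> (\<Union>a\<in>Ac. T \<inter> G a)" using \<open>t \<in> T\<close> unfolding G_def by blast
  qed
  have cnt: "countable (T \<inter> G a)" if "a \<in> Ac" for a
  proof -
    have aC: "a \<in> C" using that ch(2) by auto
    note rF = ch(4)[OF aC]
    have oG: "open (G a)" unfolding G_def by (rule open_line_vimage) simp
    have cG: "connected (G a)" unfolding G_def using convex_line_vimage[OF convex_ball] convex_connected by blast
    have mem: "z \<in> C \<and> z \<in> ball a (r a) \<longleftrightarrow> z \<in> ball a (r a) \<and> (\<forall>f\<in>F a. f z = 0)" for z
      using rF by blast
    have TG: "T \<inter> G a = {t \<in> G a. \<forall>f\<in>F a. f (u + t *s v) = 0}"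
      unfolding T_def G_def using mem by blast
    show ?thesis
    proof (cases "\<forall>f\<in>F a. \<forall>t\<in>G a. f (u + t *s v) = 0")
      case True
      then have "G a \<subseteq> T" using TG by auto
      have "G a = {}"
      proof (rule ccontr)
        assume "G a \<noteq> {}" then obtain t0 where "t0 \<in> G a" by blast
        then obtain e where "e>0" "ball t0 e \<subseteq> G a" using oG open_contains_ball by blast
        then show False using H \<open>G a \<subseteq> T\<close> unfolding T_def by blast
      qed
      then show ?thesis by simp
    next
      case False
      then obtain f t1 where f: "f \<in> F a" "t1 \<in> G a" "f (u + t1 *s v) \<noteq> 0" by blast
      have hol: "(\<lambda>t. f (u + t *s v)) holomorphic_on G a" unfolding G_def using holo_line rF f(1) by blast
      show ?thesis
      proof (cases "T \<inter> G a = {}")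
        case True then show ?thesis by simp
      next
        case False
        then obtain t2 where t2: "t2 \<in> T \<inter> G a" by blast
        then have "f (u + t2 *s v) = 0" using TG f(1) by blast
        then have nc: "\<not> (\<lambda>t. f (u + t *s v)) constant_on G a"
          using f t2 unfolding constant_on_def by (metis IntD2)
        have "countable {t \<in> G a. f (u + t *s v) = 0}"
          by (rule holomorphic_countable_zeros[OF hol oG cG open_fsigma[OF oG] nc])
        moreover have "T \<inter> G a \<subseteq> {t \<in> G a. f (u + t *s v) = 0}" using TG f(1) by blast
        ultimately show ?thesis using countable_subset by blast
      qed
    qed
  qed
  have "countable (\<Union>a\<in>Ac. T \<inter> G a)" by (rule countable_UN[OF ch(1) cnt])
  then have "countable T" by (rule countable_subset[OF Tsub])
  then have "T \<in> null_sets lebesgue" by (rule countable_null)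
  then show False using nn unfolding T_def by simp
qed

lemma codim1_empty: "proj_lc_analytic_codim1 {}"
  by (simp add: proj_lc_analytic_codim1_def lc_analytic_def cone_def)

lemma meagre_cover:
  assumes "countable I" "\<And>i. i \<in> I \<Longrightarrow> proj_lc_analytic_codim1 (B i)" "S \<subseteq> (\<Union>i\<in>I. B i)"
  shows "analytically_meagre S"
proof (cases "I = {}")
  case True
  then have "S \<subseteq> (\<Union>n::nat. {})" using assms(3) by simp
  moreover have "\<forall>n::nat. proj_lc_analytic_codim1 {}" using codim1_empty by blast
  ultimately show ?thesis unfolding analytically_meagre_def
    by (intro exI[of _ "\<lambda>_::nat. {}"]) simp
next
  case False
  define A where "A n = B (from_nat_into I n)" for n
  have "\<forall>n. proj_lc_analytic_codim1 (A n)" using from_nat_into[OF False] assms(2) unfolding A_def by blast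
  moreover have "S \<subseteq> (\<Union>n. A n)"
  proof
    fix x assume "x \<in> S" then obtain i where "i \<in> I" "x \<in> B i" using assms(3) by blast
    then obtain n where "from_nat_into I n = i" using from_nat_into_surj[OF assms(1)] by blast
    then show "x \<in> (\<Union>n. A n)" using \<open>x \<in> B i\<close> unfolding A_def by blast
  qed
  ultimately show ?thesis unfolding analytically_meagre_def by blast
qed

lemma meagre_UN:
  assumes "countable I" "\<And>i. i \<in> I \<Longrightarrow> analytically_meagre (X i)"
  shows "analytically_meagre (\<Union>i\<in>I. X i)"
proof -
  have "\<forall>i\<in>I. \<exists>A. (\<forall>n::nat. proj_lc_analytic_codim1 (A n)) \<and> X i \<subseteq> (\<Union>n. A n)"
    using assms(2) by (simp add: analytically_meagre_def)
  from bchoice[OF this] obtain AA where AA: "\<forall>i\<in>I. (\<forall>n::nat. proj_lc_analytic_codim1 (AA i n)) \<and> X i \<subseteq> (\<Union>n. AA i n)"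
    by blast
  show ?thesis
  proof (rule meagre_cover[where I="I \<times> (UNIV::nat set)" and B="\<lambda>(i,n). AA i n"])
    show "countable (I \<times> (UNIV::nat set))" using assms(1) by simp
    show "\<And>p. p \<in> I \<times> UNIV \<Longrightarrow> proj_lc_analytic_codim1 ((\<lambda>(i,n). AA i n) p)" using AA by auto
    show "(\<Union>i\<in>I. X i) \<subseteq> (\<Union>p\<in>I \<times> UNIV. (\<lambda>(i,n). AA i n) p)"
    proof
      fix x assume "x \<in> (\<Union>i\<in>I. X i)"
      then obtain i where "i \<in> I" "x \<in> X i" by blast
      then obtain n where "x \<in> AA i n" using AA by blast
      then show "x \<in> (\<Union>p\<in>I \<times> UNIV. (\<lambda>(i,n). AA i n) p)" using \<open>i \<in> I\<close> by blast
    qed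
  qed
qed

lemma holo_comp:
  assumes f: "holo_on f V" and M: "clin M"
  shows "holo_on (f \<circ> M) (M -` V)"
  unfolding holo_on_def
proof
  fix z assume "z \<in> M -` V"
  then have "M z \<in> V" by auto
  then obtain D where D: "(f has_derivative D) (at (M z))" "\<forall>c x. D (c *s x) = c * D x"
    using f unfolding holo_on_def by blast
  have "((f \<circ> M) has_derivative (D \<circ> M)) (at z)"
    by (rule diff_chain_at[OF bounded_linear_imp_has_derivative[OF clin_bl[OF M]] D(1)])
  moreover have "\<forall>c x. (D \<circ> M) (c *s x) = c * (D \<circ> M) x" using D(2) clin_scale[OF M] by simp
  ultimately show "\<exists>D. ((f \<circ> M) has_derivative D) (at z) \<and> (\<forall>c x. D (c *s x) = c * D x)" by blast
qed

lemma holo_cont: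
  assumes "holo_on f V" shows "continuous_on V f"
proof -
  have "\<forall>x\<in>V. isCont f x"
    using assms has_derivative_continuous unfolding holo_on_def by blast
  then show ?thesis by (rule continuous_at_imp_continuous_on)
qed

lemma scal_clin: "clin (\<lambda>z::complex^'a. s *s z)"
  by (rule clinI) (simp_all add: vector_add_ldistrib vector_smult_assoc mult.commute)

lemma open_scal_vimage: "open B \<Longrightarrow> open {z::complex^'a. s *s z \<in> B}"
proof -
  assume "open B"
  have "continuous_on UNIV (\<lambda>z::complex^'a. s *s z)"
    using clin_bl[OF scal_clin] linear_continuous_on by blast
  then show ?thesis using open_vimage[OF \<open>open B\<close>] by (simp add: vimage_def)
qed

lemma clin_vimage_open: "clin M \<Longrightarrow> open B \<Longrightarrow> open {z. M z \<in> B}"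
proof -
  assume M: "clin M" and "open B"
  have "continuous_on UNIV M" using clin_bl[OF M] linear_continuous_on by blast
  then show ?thesis using open_vimage[OF \<open>open B\<close>] by (simp add: vimage_def)
qed

lemma hyper_ident:
  fixes M :: "complex^'m \<Rightarrow> complex^'n" and C :: "(complex^'n) set"
  assumes M: "clin M" and Ccone: "\<And>z k. z \<in> C \<Longrightarrow> k \<noteq> 0 \<Longrightarrow> k *s z \<in> C"
    and chart: "C \<inter> ball a \<rho> = {z \<in> ball a \<rho>. \<forall>f\<in>F. f z = 0}" "\<forall>f\<in>F. holo_on f (ball a \<rho>)"
    and int: "interior {w. M w \<in> C \<and> M w \<in> {z. \<exists>s. s \<noteq> 0 \<and> s *s z \<in> ball a \<rho>}} \<noteq> {}"
    and w': "M w' \<in> ball a \<rho>"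
  shows "M w' \<in> C"
proof -
  define E where "E = {w. M w \<in> C \<and> M w \<in> {z. \<exists>s. s \<noteq> 0 \<and> s *s z \<in> ball a \<rho>}}"
  obtain w0 where "w0 \<in> interior E" using int unfolding E_def by blast
  then obtain \<epsilon> where \<epsilon>: "\<epsilon> > 0" "ball w0 \<epsilon> \<subseteq> E" using mem_interior by blast
  have "w0 \<in> E" using \<epsilon> by auto
  then obtain s where s: "s \<noteq> 0" "s *s M w0 \<in> ball a \<rho>" unfolding E_def by blast
  define W where "W = {w. inverse s *s w \<in> ball w0 \<epsilon>} \<inter> {w. M w \<in> ball a \<rho>}"
  define K where "K = {w. M w \<in> ball a \<rho>}"
  have "open W" unfolding W_def
    by (intro open_Int open_scal_vimage clin_vimage_open[OF M]) simp_all
  have "open K" unfolding K_def by (rule clin_vimage_open[OF M]) simp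
  have "convex K"
  proof -
    have "convex (M -` ball a \<rho>)" by (rule convex_linear_vimage[OF clin_linear[OF M] convex_ball])
    then show ?thesis unfolding K_def vimage_def .
  qed
  have "W \<subseteq> K" unfolding W_def K_def by blast
  have w1: "s *s w0 \<in> W"
    using s \<epsilon>(1) clin_scale[OF M, of s w0] unfolding W_def by (simp add: vector_smult_assoc)
  have W0: "\<forall>f\<in>F. f (M w) = 0" if "w \<in> W" for w
  proof -
    have "inverse s *s w \<in> E" using that \<epsilon>(2) unfolding W_def by blast
    then have "M (inverse s *s w) \<in> C" unfolding E_def by blast
    then have "s *s M (inverse s *s w) \<in> C" using Ccone s(1) by blast
    moreover have "s *s M (inverse s *s w) = M w"
      using s(1) clin_scale[OF M] by (simp add: vector_smult_assoc)
    ultimately have "M w \<in> C" by simp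
    moreover have "M w \<in> ball a \<rho>" using that unfolding W_def by blast
    ultimately show ?thesis using chart(1) by blast
  qed
  have "f (M w') = 0" if f: "f \<in> F" for f
  proof -
    have "holo_on (f \<circ> M) K"
      using holo_comp[OF _ M, of f "ball a \<rho>"] chart(2) f unfolding K_def vimage_def by blast
    moreover have "w' \<in> K" using w' unfolding K_def by simp
    ultimately have "(f \<circ> M) w' = 0"
      using holo_ident[of "f \<circ> M" K W "s *s w0" w'] \<open>convex K\<close> \<open>open K\<close> \<open>open W\<close> \<open>W \<subseteq> K\<close> w1 W0 f
      by auto
    then show ?thesis by simp
  qed
  then show ?thesis using w' chart(1) by blast
qed

lemma key:
  fixes A :: "(complex^'n) set set" and L :: "complex^'n \<Rightarrow> complex^'m" and v :: "complex^'n"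
  assumes proj: "lin_proj_from v L" and A: "proj_lc_analytic_codim1 A"
  shows "analytically_meagre (cline ` {w. w \<noteq> 0 \<and> (\<exists>u. L u = w \<and> {t. cline (u + t *s v) \<in> A} \<notin> null_sets lebesgue)})"
proof -
  define C where "C = cone A"
  have lcC: "lc_analytic C" and intC: "interior C = {}"
    using A unfolding proj_lc_analytic_codim1_def C_def by auto
  have v0: "v \<noteq> 0" and L: "clin L" and sL: "surj L" and kerL: "{u. L u = 0} = cline v"
    using proj unfolding lin_proj_from_def by auto
  have Lv: "L v = 0" using kerL cline_mem[of v] by blast
  obtain R where R: "clin R" "L \<circ> R = id" using vec.linear_surjective_right_inverse[OF L sL] by blast
  have LR: "L (R w) = w" for w using R(2) by (metis comp_apply id_apply)
  have Ccone: "\<And>z k. z \<in> C \<Longrightarrow> k \<noteq> 0 \<Longrightarrow> k *s z \<in> C" unfolding C_def by (rule cone_scale)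
  have C0: "0 \<notin> C" unfolding C_def cone_def by simp
  obtain Ac r F where ch: "countable Ac" "Ac \<subseteq> C" "C \<subseteq> (\<Union>a\<in>Ac. ball a (r a))"
    "\<And>a. a \<in> C \<Longrightarrow> r a > 0 \<and> finite (F a) \<and> (\<forall>f\<in>F a. holo_on f (ball a (r a))) \<and>
        C \<inter> ball a (r a) = {z \<in> ball a (r a). \<forall>f\<in>F a. f z = 0}"
    using lc_charts[OF lcC] by blast
  obtain Dq :: "complex set" where Dq: "countable Dq" "\<And>X. open X \<Longrightarrow> X \<noteq> {} \<Longrightarrow> \<exists>d\<in>Dq. d \<in> X"
    using countable_dense_exists by blast
  define M where "M c i w = R w + (c * w $ i) *s v" for c i w
  have Mclin: "clin (M c i)" for c i
  proof (rule clinI)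
    show "M c i (x + y) = M c i x + M c i y" for x y
      unfolding M_def clin_add[OF R(1)] by (simp add: vec_eq_iff algebra_simps)
    show "M c i (k *s x) = k *s M c i x" for k x
      unfolding M_def clin_scale[OF R(1)] by (simp add: vec_eq_iff algebra_simps)
  qed
  define Oa where "Oa a = {z. \<exists>s. s \<noteq> 0 \<and> s *s z \<in> ball a (r a)}" for a
  have oOa: "open (Oa a)" for a
  proof -
    have eq: "Oa a = (\<Union>s\<in>-{0}. {z. s *s z \<in> ball a (r a)})" unfolding Oa_def by blast
    have op: "\<forall>s\<in>-{0}. open {z. s *s z \<in> ball a (r a)}"
    proof
      fix s :: complex show "open {z. s *s z \<in> ball a (r a)}" by (rule open_scal_vimage[OF open_ball])
    qed
    show ?thesis unfolding eq by (rule open_UN[OF op])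
  qed
  define E where "E a i c = {w. M c i w \<in> C \<and> M c i w \<in> Oa a}" for a i c
  have E0: "w \<noteq> 0" if "w \<in> E a i c" for a i c w
    using that C0 clin_0[OF Mclin] unfolding E_def by auto
  have Esc: "k *s w \<in> E a i c" if "w \<in> E a i c" "k \<noteq> 0" for a i c w k
  proof -
    have eq: "M c i (k *s w) = k *s M c i w" by (rule clin_scale[OF Mclin])
    have "M c i w \<in> C" using that(1) unfolding E_def by simp
    then have 1: "M c i (k *s w) \<in> C" unfolding eq by (rule Ccone[OF _ that(2)])
    have "M c i w \<in> Oa a" using that(1) unfolding E_def by simp
    then obtain s where s: "s \<noteq> 0" "s *s M c i w \<in> ball a (r a)" unfolding Oa_def by blast
    have "(s / k) *s M c i (k *s w) = s *s M c i w"
      unfolding eq using that(2) by (simp add: vector_smult_assoc)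
    then have "(s / k) *s M c i (k *s w) \<in> ball a (r a)" "s / k \<noteq> 0" using s that(2) by simp_all
    then have 2: "M c i (k *s w) \<in> Oa a" unfolding Oa_def by blast
    show ?thesis unfolding E_def using 1 2 by simp
  qed
  define B where "B = (\<lambda>(a,i,c). if interior (E a i c) = {} then cline ` E a i c else {})"
  show ?thesis
  proof (rule meagre_cover[where I="Ac \<times> (UNIV::'m set) \<times> Dq" and B=B])
    show "countable (Ac \<times> (UNIV::'m set) \<times> Dq)" using ch(1) Dq(1) by simp
    show "proj_lc_analytic_codim1 (B p)" if "p \<in> Ac \<times> (UNIV::'m set) \<times> Dq" for p
    proof -
      obtain a i c where p: "p = (a,i,c)" by (cases p) auto
      show ?thesis
      proof (cases "interior (E a i c) = {}")
        case True
        have cE: "cone (cline ` E a i c) = E a i c" by (rule cone_cline_image[OF E0 Esc])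
        have "lc_analytic (E a i c)" unfolding E_def by (rule lc_pullback[OF lcC oOa Mclin])
        moreover have "cline ` E a i c \<subseteq> PS" using E0 cline_PS by blast
        ultimately show ?thesis using True cE unfolding B_def p proj_lc_analytic_codim1_def by simp
      next
        case False
        then show ?thesis unfolding B_def p using codim1_empty by simp
      qed
    qed
    show "cline ` {w. w \<noteq> 0 \<and> (\<exists>u. L u = w \<and> {t. cline (u + t *s v) \<in> A} \<notin> null_sets lebesgue)}
      \<subseteq> (\<Union>p\<in>Ac \<times> (UNIV::'m set) \<times> Dq. B p)"
    proof
      fix x assume "x \<in> cline ` {w. w \<noteq> 0 \<and> (\<exists>u. L u = w \<and> {t. cline (u + t *s v) \<in> A} \<notin> null_sets lebesgue)}"
      then obtain w u where wu: "x = cline w" "w \<noteq> 0" "L u = w" "{t. cline (u + t *s v) \<in> A} \<notin> null_sets lebesgue"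
        by blast
      have "{t. cline (u + t *s v) \<in> A} = {t. u + t *s v \<in> C}"
      proof -
        have "u + t *s v \<noteq> 0" for t
        proof
          assume "u + t *s v = 0"
          then have "L (u + t *s v) = 0" using clin_0[OF L] by simp
          then show False using wu(2,3) clin_add[OF L] clin_scale[OF L] Lv by simp
        qed
        then show ?thesis unfolding C_def cone_def by auto
      qed
      then have T: "{t. u + t *s v \<in> C} \<notin> null_sets lebesgue" using wu(4) by simp
      obtain t0 \<rho> where \<rho>: "\<rho> > 0" "ball t0 \<rho> \<subseteq> {t. u + t *s v \<in> C}"
        using line_nonnull_ball[OF lcC T] by blast
      have "L (u - R w) = 0" using clin_diff[OF L] LR wu(3) by simp
      then have "u - R w \<in> cline v" using kerL by blast
      then obtain \<beta> where \<beta>: "u - R w = \<beta> *s v" unfolding mem_cline by blast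
      define t1 where "t1 = t0 + \<beta>"
      have seg: "R w + t *s v \<in> C" if "t \<in> ball t1 \<rho>" for t
      proof -
        have "t - \<beta> \<in> ball t0 \<rho>" using that unfolding t1_def by (simp add: dist_norm algebra_simps)
        then have m: "u + (t - \<beta>) *s v \<in> C" using \<rho>(2) by blast
        have e: "u + (t - \<beta>) *s v = R w + t *s v"
        proof -
          have "u = R w + \<beta> *s v" using \<beta> by (simp add: algebra_simps)
          then show ?thesis by (simp add: vec_eq_iff algebra_simps)
        qed
        show ?thesis using m unfolding e .
      qed
      define z1 where "z1 = R w + t1 *s v"
      have "z1 \<in> C" unfolding z1_def using seg \<rho>(1) by simp
      then obtain a where a: "a \<in> Ac" "z1 \<in> ball a (r a)" using ch(3) by blast
      have aC: "a \<in> C" using a(1) ch(2) by blast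
      note chart = ch(4)[OF aC]
      obtain i where i: "w $ i \<noteq> 0" using wu(2) by (metis vec_eq_iff zero_index)
      have "open {t. R w + t *s v \<in> ball a (r a)}" by (rule open_line_vimage) simp
      moreover have "t1 \<in> {t. R w + t *s v \<in> ball a (r a)}" using a(2) unfolding z1_def by simp
      ultimately obtain \<epsilon> where \<epsilon>: "\<epsilon> > 0" "ball t1 \<epsilon> \<subseteq> {t. R w + t *s v \<in> ball a (r a)}"
        using open_contains_ball by blast
      define \<rho>' where "\<rho>' = min \<rho> \<epsilon>"
      define c1 where "c1 = t1 / w $ i"
      define \<delta> where "\<delta> = \<rho>' / cmod (w $ i)"
      have "\<delta> > 0" unfolding \<delta>_def \<rho>'_def using \<rho>(1) \<epsilon>(1) i by simp
      have inE: "w \<in> E a i c" if "c \<in> ball c1 \<delta>" for c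
      proof -
        have "dist t1 (c * w $ i) = cmod (w $ i) * dist c1 c"
        proof -
          have "t1 - c * w $ i = w $ i * (c1 - c)" unfolding c1_def using i by (simp add: field_simps)
          then show ?thesis by (simp add: dist_norm norm_mult)
        qed
        also have "\<dots> < cmod (w $ i) * \<delta>" using that i by simp
        also have "\<dots> = \<rho>'" unfolding \<delta>_def using i by simp
        finally have d: "c * w $ i \<in> ball t1 \<rho>" "c * w $ i \<in> ball t1 \<epsilon>" unfolding \<rho>'_def by auto
        have "M c i w \<in> C" unfolding M_def using seg[OF d(1)] .
        moreover have "M c i w \<in> ball a (r a)" unfolding M_def using \<epsilon>(2) d(2) by blast
        then have "M c i w \<in> Oa a" unfolding Oa_def by (intro CollectI exI[of _ 1]) simp
        ultimately show ?thesis unfolding E_def by blast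
      qed
      have "\<exists>c\<in>Dq. c \<in> ball c1 \<delta> \<and> interior (E a i c) = {}"
      proof (rule ccontr)
        assume H: "\<not> (\<exists>c\<in>Dq. c \<in> ball c1 \<delta> \<and> interior (E a i c) = {})"
        have HC: "M c i w' \<in> C" if "c \<in> Dq" "c \<in> ball c1 \<delta>" "M c i w' \<in> ball a (r a)" for c w'
        proof (rule hyper_ident[OF Mclin Ccone])
          show "C \<inter> ball a (r a) = {z \<in> ball a (r a). \<forall>f\<in>F a. f z = 0}" using chart by blast
          show "\<forall>f\<in>F a. holo_on f (ball a (r a))" using chart by blast
          show "interior {w. M c i w \<in> C \<and> M c i w \<in> {z. \<exists>s. s \<noteq> 0 \<and> s *s z \<in> ball a (r a)}} \<noteq> {}"
            using H that(1,2) unfolding E_def Oa_def by blast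
          show "M c i w' \<in> ball a (r a)" by (rule that(3))
        qed auto
        have chEq: "C \<inter> ball a (r a) = {z \<in> ball a (r a). \<forall>f\<in>F a. f z = 0}" using chart by blast
        have chH: "\<forall>f\<in>F a. holo_on f (ball a (r a))" using chart by blast
        define \<Phi> where "\<Phi> p = R (fst p) + snd p *s v" for p :: "(complex^'m) \<times> complex"
        have linPhi: "linear \<Phi>"
          unfolding linear_iff
        proof (intro conjI allI)
          show "\<Phi> (x + y) = \<Phi> x + \<Phi> y" for x y
            unfolding \<Phi>_def by (simp add: clin_add[OF R(1)] vec_eq_iff algebra_simps)
          show "\<Phi> (c *\<^sub>R x) = c *\<^sub>R \<Phi> x" for c x
            unfolding \<Phi>_def
            by (simp add: scaleR_cvec clin_scale[OF R(1)] vec_eq_iff algebra_simps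
                scaleR_conv_of_real[where 'a=complex])
        qed
        have surjPhi: "surj \<Phi>"
        proof -
          have "z \<in> range \<Phi>" for z
          proof -
            have "L (z - R (L z)) = 0" using clin_diff[OF L] LR by simp
            then have "z - R (L z) \<in> cline v" using kerL by blast
            then obtain \<tau> where "z - R (L z) = \<tau> *s v" unfolding mem_cline by blast
            then have "\<Phi> (L z, \<tau>) = z" unfolding \<Phi>_def by (simp add: algebra_simps)
            then show ?thesis by (metis rangeI)
          qed
          then show ?thesis by blast
        qed
        define S0 where "S0 = {p :: (complex^'m) \<times> complex. fst p $ i \<noteq> 0}"
        define G where "G = (\<lambda>p. snd p / fst p $ i) -` ball c1 \<delta> \<inter> S0"
        have "open S0" unfolding S0_def by (intro open_Collect_neq continuous_intros)
        have "continuous_on S0 (\<lambda>p. snd p / fst p $ i)" unfolding S0_def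
          by (intro continuous_intros) auto
        then have "open G" unfolding G_def using continuous_on_open_vimage[OF \<open>open S0\<close>] by blast
        have "(w, t1) \<in> G" unfolding G_def S0_def using i \<open>\<delta> > 0\<close> unfolding c1_def by simp
        define U0 where "U0 = \<Phi> ` G \<inter> ball a (r a)"
        have "open U0" unfolding U0_def
          using open_surjective_linear_image[OF \<open>open G\<close> linPhi surjPhi] by (simp add: open_Int)
        have "z1 \<in> U0" unfolding U0_def using \<open>(w, t1) \<in> G\<close> a(2) unfolding z1_def \<Phi>_def
          by (metis (no_types, lifting) IntI fst_conv image_eqI snd_conv)
        have "U0 \<subseteq> C"
        proof
          fix z assume "z \<in> U0"
          then obtain w' \<tau> where p: "(w', \<tau>) \<in> G" "z = \<Phi> (w', \<tau>)" "z \<in> ball a (r a)"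
            unfolding U0_def by auto
          have wi: "w' $ i \<noteq> 0" and cb: "\<tau> / w' $ i \<in> ball c1 \<delta>" using p(1) unfolding G_def S0_def by auto
          show "z \<in> C"
          proof (rule ccontr)
            assume "z \<notin> C"
            have "\<not> (\<forall>f\<in>F a. f z = 0)"
            proof
              assume "\<forall>f\<in>F a. f z = 0"
              then have "z \<in> {z \<in> ball a (r a). \<forall>f\<in>F a. f z = 0}" using p(3) by simp
              then show False using chEq \<open>z \<notin> C\<close> by blast
            qed
            then obtain f where f: "f \<in> F a" "f z \<noteq> 0" by blast
            define N where "N = f -` (-{0}) \<inter> ball a (r a)"
            have "continuous_on (ball a (r a)) f" using holo_cont chH f(1) by blast
            then have "\<forall>B. open B \<longrightarrow> open (f -` B \<inter> ball a (r a))"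
              using continuous_on_open_vimage[OF open_ball] by blast
            moreover have "open (-{0::complex})" by (simp add: open_Compl)
            ultimately have "open N" unfolding N_def by blast
            have "z \<in> N" using f p(3) unfolding N_def by simp
            then obtain \<epsilon>2 where \<epsilon>2: "\<epsilon>2 > 0" "ball z \<epsilon>2 \<subseteq> N" using \<open>open N\<close> open_contains_ball by blast
            define c where "c = \<tau> / w' $ i"
            define Q where "Q = {k. R w' + k *s (w' $ i *s v) \<in> ball z \<epsilon>2}"
            have "open Q" unfolding Q_def by (rule open_line_vimage) simp
            have zeq: "R w' + c *s (w' $ i *s v) = z"
              using wi unfolding c_def p(2) \<Phi>_def by (simp add: vector_smult_assoc)
            have "c \<in> Q \<inter> ball c1 \<delta>" using zeq \<epsilon>2(1) cb unfolding Q_def c_def by simp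
            then have "Q \<inter> ball c1 \<delta> \<noteq> {}" by blast
            then obtain c' where c': "c' \<in> Dq" "c' \<in> Q \<inter> ball c1 \<delta>"
              using Dq(2)[of "Q \<inter> ball c1 \<delta>"] \<open>open Q\<close> by blast
            have Meq: "M c' i w' = R w' + c' *s (w' $ i *s v)" unfolding M_def by (simp add: vector_smult_assoc)
            have "M c' i w' \<in> N" using c'(2) \<epsilon>2(2) unfolding Q_def Meq by blast
            then have Mb: "M c' i w' \<in> ball a (r a)" and Mf: "f (M c' i w') \<noteq> 0" unfolding N_def by auto
            have "M c' i w' \<in> C" using HC[OF c'(1) _ Mb] c'(2) by blast
            then have "M c' i w' \<in> {z \<in> ball a (r a). \<forall>f\<in>F a. f z = 0}" using chEq Mb by blast
            then show False using Mf f(1) by blast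
          qed
        qed
        then have "U0 \<subseteq> interior C" using interior_maximal \<open>open U0\<close> by blast
        then show False using \<open>z1 \<in> U0\<close> intC by blast
      qed
      then obtain c where c: "c \<in> Dq" "c \<in> ball c1 \<delta>" "interior (E a i c) = {}" by blast
      have "x \<in> B (a, i, c)" unfolding B_def using c(3) inE[OF c(2)] wu(1) by simp
      then show "x \<in> (\<Union>p\<in>Ac \<times> (UNIV::'m set) \<times> Dq. B p)" using a(1) c(1) by blast
    qed
  qed
qed

theorem lemma3p6:
  fixes GN \<Sigma> :: "(complex^'n) set set"
    and GN1 :: "(complex^'m) set set"
    and v :: "complex^'n"
    and L :: "complex^'n \<Rightarrow> complex^'m"
  assumes dim: "CARD('n) = CARD('m) + 1"
    and GN_sub: "GN \<subseteq> PS"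
    and Sigma: "analytically_meagre \<Sigma>"
    and GN1_sub: "GN1 \<subseteq> PS"
    and GN1_dense: "\<forall>S. analytically_meagre S \<longrightarrow> proj_dense (GN1 - S)"
    and proj: "lin_proj_from v L"
    and fib: "\<forall>w u. w \<noteq> 0 \<and> L u = w \<and> cline w \<in> GN1 \<and> proj_fiber v L (cline w) - \<Sigma> \<noteq> {}
                 \<longrightarrow> {t::complex. cline (u + t *s v) \<notin> GN} \<in> null_sets lebesgue"
  shows "\<forall>S. analytically_meagre S \<longrightarrow> proj_dense (GN - S)"
proof (intro allI impI)
  fix S :: "(complex^'n) set set" assume S: "analytically_meagre S"
  obtain AS where AS: "\<forall>i::nat. proj_lc_analytic_codim1 (AS i)" "S \<subseteq> (\<Union>i. AS i)"
    using S unfolding analytically_meagre_def by blast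
  obtain ASig where ASig: "\<forall>i::nat. proj_lc_analytic_codim1 (ASig i)" "\<Sigma> \<subseteq> (\<Union>i. ASig i)"
    using Sigma unfolding analytically_meagre_def by blast
  have v0: "v \<noteq> 0" and L: "clin L" and sL: "surj L" and kerL: "{u. L u = 0} = cline v"
    using proj unfolding lin_proj_from_def by auto
  have Lv: "L v = 0" using kerL cline_mem[of v] by blast
  define Bad where "Bad A = cline ` {w. w \<noteq> 0 \<and> (\<exists>u. L u = w \<and> {t. cline (u + t *s v) \<in> A} \<notin> null_sets lebesgue)}"
    for A :: "(complex^'n) set set"
  define AA where "AA p = (if fst p then AS (snd p) else ASig (snd p))" for p :: "bool \<times> nat"
  have AAc: "proj_lc_analytic_codim1 (AA p)" for p unfolding AA_def using AS(1) ASig(1) by simp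
  define S' where "S' = (\<Union>p\<in>(UNIV::(bool \<times> nat) set). Bad (AA p))"
  have "analytically_meagre S'" unfolding S'_def
  proof (rule meagre_UN)
    show "countable (UNIV::(bool \<times> nat) set)" by simp
    show "analytically_meagre (Bad (AA p))" if "p \<in> UNIV" for p
      unfolding Bad_def by (rule key[OF proj AAc])
  qed
  then have dense: "proj_dense (GN1 - S')" using GN1_dense by blast
  have nz: "u + t *s v \<noteq> 0" if "L u \<noteq> 0" for u t
  proof
    assume "u + t *s v = 0"
    then have "L (u + t *s v) = 0" using clin_0[OF L] by simp
    then show False using that clin_add[OF L] clin_scale[OF L] Lv by simp
  qed
  have Lline: "L (u + t *s v) = L u" for u t using clin_add[OF L] clin_scale[OF L] Lv by simp
  show "proj_dense (GN - S)" unfolding proj_dense_def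
  proof (intro allI impI)
    fix U :: "(complex^'n) set set" assume U: "proj_open U \<and> U \<noteq> {}"
    have Usub: "U \<subseteq> PS" and oU: "open (cone U)" using U unfolding proj_open_def by auto
    obtain y where "y \<in> U" using U by blast
    then obtain z0 where z0: "z0 \<noteq> 0" "z0 \<in> cone U" using PS_cone[OF _ Usub] by blast
    have oLU: "open (L ` cone U)" by (rule open_surjective_linear_image[OF oU clin_linear[OF L] sL])
    obtain w0 where w0: "w0 \<in> L ` cone U" "w0 \<noteq> 0"
    proof (rule ccontr)
      assume "\<not> thesis"
      then have "L ` cone U \<subseteq> {0}" using that by blast
      moreover have "L z0 \<in> L ` cone U" using z0(2) by (rule imageI)
      ultimately have "L ` cone U = {0}" by auto
      then show False using oLU not_open_singleton[of "0::complex^'m"] by simp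
    qed
    define Om where "Om = L ` cone U - {0}"
    have oOm: "open Om" unfolding Om_def using oLU by (simp add: open_Diff)
    have Om0: "w \<noteq> 0" if "w \<in> Om" for w using that unfolding Om_def by blast
    have Omsc: "k *s w \<in> Om" if wk: "w \<in> Om" "k \<noteq> 0" for w k
    proof -
      obtain z where z: "z \<in> cone U" "w = L z" "w \<noteq> 0" using wk(1) unfolding Om_def by blast
      have "k *s z \<in> cone U" by (rule cone_scale[OF z(1) wk(2)])
      moreover have "L (k *s z) = k *s w" using clin_scale[OF L] z(2) by simp
      moreover have "k *s w \<noteq> 0" using z(3) wk(2) by (simp add: vec_eq_iff)
      ultimately show ?thesis unfolding Om_def by (metis DiffI image_eqI singletonD)
    qed
    define V1 where "V1 = cline ` Om"
    have cV1: "cone V1 = Om" unfolding V1_def by (rule cone_cline_image[OF Om0 Omsc])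
    have "proj_open V1" unfolding proj_open_def cV1 using oOm Om0 cline_PS unfolding V1_def by blast
    moreover have "V1 \<noteq> {}" using w0 unfolding V1_def Om_def by blast
    ultimately have "V1 \<inter> (GN1 - S') \<noteq> {}" using dense unfolding proj_dense_def by blast
    then obtain x where x: "x \<in> V1" "x \<in> GN1" "x \<notin> S'" by blast
    then obtain w where w: "w \<in> Om" "x = cline w" unfolding V1_def by blast
    then obtain u where u: "u \<in> cone U" "L u = w" "w \<noteq> 0" unfolding Om_def by blast
    have nullA: "{t. cline (u + t *s v) \<in> AA p} \<in> null_sets lebesgue" for p
    proof (rule ccontr)
      assume "{t. cline (u + t *s v) \<in> AA p} \<notin> null_sets lebesgue"
      then have "x \<in> Bad (AA p)" unfolding Bad_def w(2) using u(2,3) by blast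
      then show False using x(3) unfolding S'_def by blast
    qed
    have fibne: "proj_fiber v L (cline w) - \<Sigma> \<noteq> {}"
    proof
      assume E: "proj_fiber v L (cline w) - \<Sigma> = {}"
      have "cline (u + t *s v) \<in> \<Sigma>" for t
      proof -
        have nz': "u + t *s v \<noteq> 0" using nz u by simp
        have "cline (u + t *s v) \<noteq> cline v"
        proof
          assume "cline (u + t *s v) = cline v"
          then have "u + t *s v \<in> cline v" using cline_mem by metis
          then have "L (u + t *s v) = 0" using kerL by blast
          then show False using Lline u by simp
        qed
        moreover have "L ` cline (u + t *s v) = cline w" using L_cline[OF L] Lline u(2) by simp
        ultimately have "cline (u + t *s v) \<in> proj_fiber v L (cline w)"
          unfolding proj_fiber_def using cline_PS[OF nz'] by blast
        then show ?thesis using E by blast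
      qed
      then have sub: "UNIV \<subseteq> (\<Union>j. {t. cline (u + t *s v) \<in> AA (False, j)})"
        using ASig(2) unfolding AA_def by auto
      have nu: "(\<Union>j. {t. cline (u + t *s v) \<in> AA (False, j)}) \<in> null_sets lebesgue"
        using null_sets_UN[where N="\<lambda>j. {t. cline (u + t *s v) \<in> AA (False, j)}", OF nullA] .
      have "(UNIV::complex set) \<in> null_sets lebesgue"
        using null_sets_subset[OF nu _ sub] by simp
      then show False using open_nonnull[of UNIV] by simp
    qed
    have Nnull: "{t::complex. cline (u + t *s v) \<notin> GN} \<in> null_sets lebesgue"
      using fib u w x(2) fibne by blast
    define TU where "TU = {t. u + t *s v \<in> cone U}"
    have "open TU" unfolding TU_def by (rule open_line_vimage[OF oU])
    have "0 \<in> TU" unfolding TU_def using u(1) by simp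
    define Z where "Z = {t::complex. cline (u + t *s v) \<notin> GN} \<union> (\<Union>j. {t. cline (u + t *s v) \<in> AA (True, j)})"
    have "Z \<in> null_sets lebesgue" unfolding Z_def
      using null_sets.Un[OF Nnull null_sets_UN[where N="\<lambda>j. {t. cline (u + t *s v) \<in> AA (True, j)}", OF nullA]] .
    have "\<not> TU \<subseteq> Z"
    proof
      assume "TU \<subseteq> Z"
      moreover have "TU \<in> sets lebesgue" using \<open>open TU\<close> by simp
      ultimately have "TU \<in> null_sets lebesgue" using null_sets_subset \<open>Z \<in> null_sets lebesgue\<close> by blast
      then show False using open_nonnull[OF \<open>open TU\<close>] \<open>0 \<in> TU\<close> by blast
    qed
    then obtain t where t: "t \<in> TU" "t \<notin> Z" by blast
    define y' where "y' = cline (u + t *s v)"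
    have "y' \<in> U" using t(1) unfolding TU_def cone_def y'_def by blast
    moreover have "y' \<in> GN" using t(2) unfolding Z_def y'_def by blast
    moreover have "y' \<notin> S"
    proof
      assume "y' \<in> S"
      then obtain j where "y' \<in> AS j" using AS(2) by blast
      then have "t \<in> Z" unfolding Z_def AA_def y'_def by auto
      then show False using t(2) by blast
    qed
    ultimately show "U \<inter> (GN - S) \<noteq> {}" by blast
  qed
qed

end
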